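(* Let $0<\sigma<\tau$, $\mu>0$, $\kappa_2\in(0,1)$ and $t_2\in(\sigma,\tau)$. For every $\omega\ge(1-\kappa_2)/(\tau-t_2)$, any solution $(x(t),y(t))$ on $[\sigma,\tau]$ of \[ x'=y,\qquad y'=\mu a^-(t)g(x) \] with $x(t_2)\ge\kappa_2$ and $y(t_2)\ge\omega$ satisfies $x(\tau)\ge1$ and $y(\tau)\ge\omega$.
   Context: $a\in L^1(\sigma,\tau)$ with negative part $a^-\ge0$. $g\colon\mathbb{R}\to[0,+\infty)$ is the extension by zero outside $[0,1]$ of a locally Lipschitz continuous function $g\colon[0,1]\to[0,+\infty)$ with $g(0)=g(1)=0$, $g(s)>0$ for $0<s<1$ and $\lim_{s\to0^+}g(s)/s=0$. Solutions are in the Carathéodory sense. *)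

theory Defs
  imports "HOL-Analysis.Analysis"
begin

definition neg_part :: "(real \<Rightarrow> real) \<Rightarrow> real \<Rightarrow> real" where
  "neg_part a t = max 0 (- a t)"

text \<open>Caratheodory solution on [sigma,tau] of x' = y, y' = mu a^-(t) g(x):
  x and y are absolutely continuous and satisfy the equations a.e.;
  equivalently (Lebesgue fundamental theorem of calculus) the right-hand sides
  are Lebesgue integrable on [sigma,tau] and x, y satisfy the integral equations.\<close>
definition carath_solution ::
  "real \<Rightarrow> real \<Rightarrow> real \<Rightarrow> (real \<Rightarrow> real) \<Rightarrow> (real \<Rightarrow> real)
     \<Rightarrow> (real \<Rightarrow> real) \<Rightarrow> (real \<Rightarrow> real) \<Rightarrow> bool" where
  "carath_solution \<sigma> \<tau> \<mu> a g x y \<longleftrightarrow>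
     set_integrable lborel {\<sigma>..\<tau>} y \<and>
     set_integrable lborel {\<sigma>..\<tau>} (\<lambda>s. \<mu> * neg_part a s * g (x s)) \<and>
     (\<forall>t\<in>{\<sigma>..\<tau>}. x t = x \<sigma> + (LINT s:{\<sigma>..t}|lborel. y s)) \<and>
     (\<forall>t\<in>{\<sigma>..\<tau>}. y t = y \<sigma> + (LINT s:{\<sigma>..t}|lborel. \<mu> * neg_part a s * g (x s)))"

end

theory Submission
  imports Defs
begin

lemma const_si: "set_integrable lborel {u<..t::real} (\<lambda>_. c::real)"
  unfolding set_integrable_def
  by (rule integrable_scaleR_left) (cases "u \<le> t"; simp add: integrable_indicator_iff)

lemma split_int:
  fixes f :: "real \<Rightarrow> real"
  assumes "set_integrable lborel {s..T} f" "s \<le> u" "u \<le> t" "t \<le> T"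
  shows "(LINT r:{s..t}|lborel. f r) = (LINT r:{s..u}|lborel. f r) + (LINT r:{u<..t}|lborel. f r)"
proof -
  have e: "{s..t} = {s..u} \<union> {u<..t}" using assms by auto
  have i1: "set_integrable lborel {s..u} f"
    by (rule set_integrable_subset[OF assms(1)]) (use assms in auto)
  have i2: "set_integrable lborel {u<..t} f"
    by (rule set_integrable_subset[OF assms(1)]) (use assms in auto)
  show ?thesis unfolding e by (rule set_integral_Un) (use i1 i2 in auto)
qed

theorem lemma2p6:
  fixes \<sigma> \<tau> \<mu> \<kappa>\<^sub>2 t\<^sub>2 \<omega> :: real
    and a g x y :: "real \<Rightarrow> real"
  assumes "0 < \<sigma>" and "\<sigma> < \<tau>" and "\<mu> > 0"
    and "0 < \<kappa>\<^sub>2" and "\<kappa>\<^sub>2 < 1"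
    and "\<sigma> < t\<^sub>2" and "t\<^sub>2 < \<tau>"
    and a_L1: "set_integrable lborel {\<sigma>..\<tau>} a"
    and g_nonneg: "\<forall>s. g s \<ge> 0"
    and g_zero_out: "\<forall>s. s \<notin> {0..1} \<longrightarrow> g s = 0"
    and g_loc_lip: "\<forall>s\<in>{0..1}. \<exists>\<epsilon>>0. \<exists>L. L-lipschitz_on (cball s \<epsilon> \<inter> {0..1}) g"
    and g0: "g 0 = 0" and g1: "g 1 = 0"
    and g_pos: "\<forall>s. 0 < s \<and> s < 1 \<longrightarrow> g s > 0"
    and g_lim: "((\<lambda>s. g s / s) \<longlongrightarrow> 0) (at_right 0)"
    and \<omega>: "\<omega> \<ge> (1 - \<kappa>\<^sub>2) / (\<tau> - t\<^sub>2)"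
    and sol: "carath_solution \<sigma> \<tau> \<mu> a g x y"
    and "x t\<^sub>2 \<ge> \<kappa>\<^sub>2" and "y t\<^sub>2 \<ge> \<omega>"
  shows "x \<tau> \<ge> 1 \<and> y \<tau> \<ge> \<omega>"
proof -
  define h where "h = (\<lambda>s. \<mu> * neg_part a s * g (x s))"
  have yi: "set_integrable lborel {\<sigma>..\<tau>} y" and hi: "set_integrable lborel {\<sigma>..\<tau>} h"
    and xe: "\<forall>t\<in>{\<sigma>..\<tau>}. x t = x \<sigma> + (LINT s:{\<sigma>..t}|lborel. y s)"
    and ye: "\<forall>t\<in>{\<sigma>..\<tau>}. y t = y \<sigma> + (LINT s:{\<sigma>..t}|lborel. h s)"
    using sol unfolding carath_solution_def h_def by blast+
  have hnn: "\<And>s. h s \<ge> 0" unfolding h_def neg_part_def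
    using g_nonneg \<open>\<mu> > 0\<close> by simp
  have ymono: "y t \<ge> y t\<^sub>2" if "t\<^sub>2 \<le> t" "t \<le> \<tau>" for t
  proof -
    have "y t = y t\<^sub>2 + (LINT s:{t\<^sub>2<..t}|lborel. h s)"
    proof -
      have e1: "y t = y \<sigma> + (LINT s:{\<sigma>..t}|lborel. h s)" by (rule ye[rule_format]) (use that assms(6,7) in simp)
      have e2: "y t\<^sub>2 = y \<sigma> + (LINT s:{\<sigma>..t\<^sub>2}|lborel. h s)" by (rule ye[rule_format]) (use that assms(6,7) in simp)
      have e3: "(LINT s:{\<sigma>..t}|lborel. h s) = (LINT s:{\<sigma>..t\<^sub>2}|lborel. h s) + (LINT s:{t\<^sub>2<..t}|lborel. h s)"
        by (rule split_int[OF hi]) (use that assms(6,7) in auto)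
      show ?thesis using e1 e2 e3 by linarith
    qed
    moreover have "(LINT s:{t\<^sub>2<..t}|lborel. h s) \<ge> (LINT s:{t\<^sub>2<..t}|lborel. 0)"
      by (rule set_integral_mono[OF const_si set_integrable_subset[OF hi]]) (use hnn that assms(6,7) in auto)
    ultimately show ?thesis by simp
  qed
  have "x \<tau> = x t\<^sub>2 + (LINT s:{t\<^sub>2<..\<tau>}|lborel. y s)"
  proof -
    have e1: "x \<tau> = x \<sigma> + (LINT s:{\<sigma>..\<tau>}|lborel. y s)" by (rule xe[rule_format]) (use assms(2) in simp)
    have e2: "x t\<^sub>2 = x \<sigma> + (LINT s:{\<sigma>..t\<^sub>2}|lborel. y s)" by (rule xe[rule_format]) (use assms(6,7) in simp)
    have e3: "(LINT s:{\<sigma>..\<tau>}|lborel. y s) = (LINT s:{\<sigma>..t\<^sub>2}|lborel. y s) + (LINT s:{t\<^sub>2<..\<tau>}|lborel. y s)"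
      by (rule split_int[OF yi]) (use assms(6,7) in auto)
    show ?thesis using e1 e2 e3 by linarith
  qed
  moreover have "(LINT s:{t\<^sub>2<..\<tau>}|lborel. y s) \<ge> (LINT s:{t\<^sub>2<..\<tau>}|lborel. \<omega>)"
  proof (rule set_integral_mono[OF const_si set_integrable_subset[OF yi]])
    fix s assume "s \<in> {t\<^sub>2<..\<tau>}"
    then have "y s \<ge> y t\<^sub>2" using ymono[of s] by simp
    then show "\<omega> \<le> y s" using \<open>y t\<^sub>2 \<ge> \<omega>\<close> by linarith
  qed (use assms(6,7) in auto)
  moreover have "(LINT s:{t\<^sub>2<..\<tau>}|lborel. \<omega>) = (\<tau> - t\<^sub>2) * \<omega>"
    using assms(7) by (simp add: set_integral_const)
  moreover have "(\<tau> - t\<^sub>2) * \<omega> \<ge> 1 - \<kappa>\<^sub>2"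
    using \<omega> assms(7) by (simp add: divide_le_eq mult.commute)
  ultimately have "x \<tau> \<ge> 1" using \<open>x t\<^sub>2 \<ge> \<kappa>\<^sub>2\<close> by linarith
  moreover have "y \<tau> \<ge> \<omega>" using ymono[of \<tau>] assms(7) \<open>y t\<^sub>2 \<ge> \<omega>\<close> by auto
  ultimately show ?thesis by simp
qed

end
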